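(* Fix $f\in\mathbb{N}$, $\ell=2f+1$. For a family of directed graphs $G=(V,E)$ with $n=|V|\to\infty$, each with a partition of $V$ into regions $R_1,\dots,R_k$, let $R=\max_{k'}|R_{k'}|$, $r=\min_{k'}|R_{k'}|$, and consider the region-based Byzantine reinforcement $G'$, $P$, $A'$ (as defined in the context). Let $F'\subseteq V'$ contain each node independently with probability $p=p(n)$ (Byzantine faults), and assume $Rp\in o(1)$. (a) If $p\in o\big((n/r)^{-1/(f+1)}/R\big)$, the reinforcement is valid under $\mathrm{Byz}(p)$: with probability $1-o(1)$, for every region $R_{k'}$ there are at least $f+1$ indices $i\in[\ell]$ with $\{v_i:v\in R_{k'}\}\cap F'=\emptyset$, and hence $A'$ simulates $A$. (b) If $G$ contains $\Omega(n)$ nodes with non-zero outdegree, $R\in O(1)$, and $p\in\omega(n^{-1/(f+1)})$, then with probability $1-o(1)$ some node with non-zero outdegree has more than $f$ faulty copies, and the reinforcement is not valid.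
   Context: Region-based Byzantine reinforcement: $V'=V\times[\ell]$, $v_i=(v,i)$, $P(v_i)=v$, $E'=\bigcup_{e\in E}E'_e$ with, for $e=(v,w)\in E$, $E'_e=\{(v_i,w_i):i\in[\ell]\}$ if $v,w$ are in the same region and $E'_e=\{(v_i,w_j):i,j\in[\ell]\}$ otherwise. In $A'$, each non-faulty $v'$ keeps a copy of the state of $P(v')$ under $A$, sends on each $(v',w')\in E'$ the message $P(v')$ would send on $(P(v'),P(w'))$, and updates its state as if $P(v')$ received from each in-neighbor $w$ the majority message among those sent to $v'$ by the copies $w'$ of $w$ with $(w',v')\in E'$. Synchronous network model with scheduling algorithm $A$ (each round: send messages on outgoing links based on state, update state from received messages and input). $\mathrm{Byz}(p)$: each node of $V'$ independently faulty with probability $p$, faulty nodes behaving arbitrarily. Simulation under $\mathrm{Byz}(p)$: for each $v\in V$ a strict majority of its copies compute in every round the state of $v$ in the fault-free execution of $A$ (non-faulty copies getting the same input as $v$). Valid: $A'$ simulates $A$ with probability $1-o(1)$ as $n\to\infty$ ($f$ fixed). *)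

theory Defs
  imports "HOL-Probability.Probability" "HOL-Library.Landau_Symbols"
    "HOL-Library.Disjoint_Sets" "HOL-Library.Multiset"
begin

text \<open>A synchronous scheduling algorithm: initial states, the message node v sends on
  link (v,w) given its state, and the state update of v given its state, the messages
  received from its in-neighbours (Some m from in-neighbour w, None otherwise) and its input.\<close>
record ('v,'s,'m,'i) alg =
  a_init :: "'v \<Rightarrow> 's"
  a_send :: "'v \<Rightarrow> 'v \<Rightarrow> 's \<Rightarrow> 'm"
  a_upd  :: "'v \<Rightarrow> 's \<Rightarrow> ('v \<Rightarrow> 'm option) \<Rightarrow> 'i \<Rightarrow> 's"

fun exec :: "('v \<times> 'v) set \<Rightarrow> ('v,'s,'m,'i) alg \<Rightarrow> (nat \<Rightarrow> 'v \<Rightarrow> 'i) \<Rightarrow> nat \<Rightarrow> 'v \<Rightarrow> 's" where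
  "exec E A inp 0 = (\<lambda>v. a_init A v)"
| "exec E A inp (Suc t) = (let st = exec E A inp t in
     (\<lambda>v. a_upd A v (st v)
            (\<lambda>w. if (w, v) \<in> E then Some (a_send A w v (st w)) else None) (inp t v)))"

text \<open>Number of copies: ell = 2f+1; copies of v are (v,i), i < ell; P = fst.\<close>
abbreviation ell :: "nat \<Rightarrow> nat" where "ell f \<equiv> 2 * f + 1"

definition same_region :: "'v set set \<Rightarrow> 'v \<Rightarrow> 'v \<Rightarrow> bool" where
  "same_region Rs v w \<longleftrightarrow> (\<exists>S\<in>Rs. v \<in> S \<and> w \<in> S)"

definition reinf_edges :: "nat \<Rightarrow> 'v set set \<Rightarrow> ('v \<times> 'v) set \<Rightarrow> (('v \<times> nat) \<times> ('v \<times> nat)) set" where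
  "reinf_edges f Rs E = {((v,i),(w,j)). (v,w) \<in> E \<and> i < ell f \<and> j < ell f \<and>
                                         (same_region Rs v w \<longrightarrow> i = j)}"

definition maj :: "('m multiset \<Rightarrow> 'm) \<Rightarrow> 'm multiset \<Rightarrow> 'm" where
  "maj tb M = (if \<exists>m. 2 * count M m > size M then (THE m. 2 * count M m > size M) else tb M)"

text \<open>Execution of the reinforced algorithm A' with faulty set F; adv t w' v' is the
  (arbitrary) message the faulty node w' sends to v' in round t.  The states of faulty
  nodes are irrelevant (they only influence anything through adv).\<close>
fun rexec :: "nat \<Rightarrow> 'v set set \<Rightarrow> ('v \<times> 'v) set \<Rightarrow> ('v,'s,'m,'i) alg \<Rightarrow> ('m multiset \<Rightarrow> 'm)
    \<Rightarrow> ('v \<times> nat) set \<Rightarrow> (nat \<Rightarrow> 'v \<times> nat \<Rightarrow> 'v \<times> nat \<Rightarrow> 'm) \<Rightarrow> (nat \<Rightarrow> 'v \<Rightarrow> 'i)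
    \<Rightarrow> nat \<Rightarrow> 'v \<times> nat \<Rightarrow> 's" where
  "rexec f Rs E A tb F adv inp 0 = (\<lambda>v'. a_init A (fst v'))"
| "rexec f Rs E A tb F adv inp (Suc t) = (let st = rexec f Rs E A tb F adv inp t;
     msg = (\<lambda>w' v'. if w' \<in> F then adv t w' v' else a_send A (fst w') (fst v') (st w')) in
     (\<lambda>v'. a_upd A (fst v') (st v')
        (\<lambda>w. if (w, fst v') \<in> E then
               Some (maj tb (image_mset (\<lambda>w'. msg w' v')
                 (mset_set {w'. fst w' = w \<and> (w', v') \<in> reinf_edges f Rs E})))
             else None)
        (inp t (fst v'))))"

definition simulates :: "nat \<Rightarrow> 'v set \<Rightarrow> ('v \<times> 'v) set \<Rightarrow> 'v set set \<Rightarrow> ('v,'s,'m,'i) alg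
    \<Rightarrow> ('m multiset \<Rightarrow> 'm) \<Rightarrow> ('v \<times> nat) set \<Rightarrow> (nat \<Rightarrow> 'v \<times> nat \<Rightarrow> 'v \<times> nat \<Rightarrow> 'm)
    \<Rightarrow> (nat \<Rightarrow> 'v \<Rightarrow> 'i) \<Rightarrow> bool" where
  "simulates f V E Rs A tb F adv inp \<longleftrightarrow>
     (\<forall>v\<in>V. \<exists>S \<subseteq> {..<ell f}. 2 * card S > ell f \<and>
        (\<forall>i\<in>S. (v, i) \<notin> F \<and> (\<forall>t. rexec f Rs E A tb F adv inp t (v, i) = exec E A inp t v)))"

definition fault_pmf :: "nat \<Rightarrow> 'v set \<Rightarrow> real \<Rightarrow> ('v \<times> nat \<Rightarrow> bool) pmf" where
  "fault_pmf f V p = Pi_pmf (V \<times> {..<ell f}) False (\<lambda>_. bernoulli_pmf p)"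

definition valid :: "nat \<Rightarrow> (nat \<Rightarrow> 'v set) \<Rightarrow> (nat \<Rightarrow> ('v \<times> 'v) set) \<Rightarrow> (nat \<Rightarrow> 'v set set)
    \<Rightarrow> (nat \<Rightarrow> ('v,'s,'m,'i) alg) \<Rightarrow> ('m multiset \<Rightarrow> 'm) \<Rightarrow> (nat \<Rightarrow> real) \<Rightarrow> bool" where
  "valid f V E Rs A tb p \<longleftrightarrow>
     ((\<lambda>j. measure_pmf.prob (fault_pmf f (V j) (p j))
        {x. \<forall>adv inp. simulates f (V j) (E j) (Rs j) (A j) tb {v'. x v'} adv inp}) \<longlonglongrightarrow> 1)"

end

theory Submission
  imports Defs
begin


lemma count2_le: "a \<noteq> b \<Longrightarrow> count M a + count M b \<le> size M"
proof -
  assume ab: "a \<noteq> b"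
  have "replicate_mset (count M a) a + replicate_mset (count M b) b \<subseteq># M"
    unfolding subseteq_mset_def
  proof
    fix y
    show "count (replicate_mset (count M a) a + replicate_mset (count M b) b) y \<le> count M y"
      using ab by (cases "y = a"; cases "y = b") (simp_all only: count_union count_replicate_mset if_True if_False, simp_all)
  qed
  from size_mset_mono[OF this] show ?thesis by simp
qed

lemma maj_eq: assumes "2 * count M m > size M" shows "maj tb M = m"
proof -
  have "\<And>m'. 2 * count M m' > size M \<Longrightarrow> m' = m"
  proof (rule ccontr)
    fix m' assume h: "2 * count M m' > size M" "m' \<noteq> m"
    from count2_le[OF h(2), of M] h(1) assms show False by linarith
  qed
  then have "(THE m. 2 * count M m > size M) = m" using assms by (intro the_equality)
  then show ?thesis using assms unfolding maj_def by metis
qed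

lemma part_unique: "partition_on V Rs \<Longrightarrow> S \<in> Rs \<Longrightarrow> S' \<in> Rs \<Longrightarrow> v \<in> S \<Longrightarrow> v \<in> S' \<Longrightarrow> S = S'"
proof (rule ccontr)
  assume "partition_on V Rs" "S \<in> Rs" "S' \<in> Rs" "v \<in> S" "v \<in> S'" "S \<noteq> S'"
  then have "S \<inter> S' = {}" using partition_onD2 disjointD by metis
  then show False using \<open>v \<in> S\<close> \<open>v \<in> S'\<close> by blast
qed

lemma part_ex: "partition_on V Rs \<Longrightarrow> v \<in> V \<Longrightarrow> \<exists>S\<in>Rs. v \<in> S"
  using partition_onD1 by blast

lemma sim_core:
  assumes edges: "E \<subseteq> V \<times> V" and part: "partition_on V Rs"
    and good: "\<forall>S\<in>Rs. f + 1 \<le> card {i. i < ell f \<and> (\<forall>v\<in>S. \<not> x (v, i))}"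
  shows "\<forall>v\<in>V. \<forall>i. (\<exists>S\<in>Rs. v \<in> S \<and> i < ell f \<and> (\<forall>u\<in>S. \<not> x (u, i))) \<longrightarrow>
           rexec f Rs E A tb {v'. x v'} adv inp t (v, i) = exec E A inp t v"
proof (induction t)
  case 0
  then show ?case by simp
next
  case (Suc t)
  let ?st = "rexec f Rs E A tb {v'. x v'} adv inp t"
  let ?msg = "(\<lambda>w' v'. if w' \<in> {v'. x v'} then adv t w' v' else a_send A (fst w') (fst v') (?st w'))"
  show ?case
  proof (intro ballI allI impI)
    have IH: "\<And>u j S. u \<in> V \<Longrightarrow> S \<in> Rs \<Longrightarrow> u \<in> S \<Longrightarrow> j < ell f \<Longrightarrow> \<forall>u\<in>S. \<not> x (u, j) \<Longrightarrow> ?st (u, j) = exec E A inp t u"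
      using Suc.IH by blast
    fix v i assume vV: "v \<in> V" and cl: "\<exists>S\<in>Rs. v \<in> S \<and> i < ell f \<and> (\<forall>u\<in>S. \<not> x (u, i))"
    then obtain S where S: "S \<in> Rs" "v \<in> S" "i < ell f" "\<forall>u\<in>S. \<not> x (u, i)" by blast
    have msgs: "(\<lambda>w. if (w, v) \<in> E then
               Some (maj tb (image_mset (\<lambda>w'. ?msg w' (v,i))
                 (mset_set {w'. fst w' = w \<and> (w', (v,i)) \<in> reinf_edges f Rs E})))
             else None) =
          (\<lambda>w. if (w, v) \<in> E then Some (a_send A w v (exec E A inp t w)) else None)"
    proof
      fix w
      show "(if (w, v) \<in> E then
               Some (maj tb (image_mset (\<lambda>w'. ?msg w' (v,i))
                 (mset_set {w'. fst w' = w \<and> (w', (v,i)) \<in> reinf_edges f Rs E})))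
             else None) =
          (if (w, v) \<in> E then Some (a_send A w v (exec E A inp t w)) else None)"
      proof (cases "(w, v) \<in> E")
        case False then show ?thesis by simp
      next
        case True
        have wV: "w \<in> V" using True edges by auto
        let ?m0 = "a_send A w v (exec E A inp t w)"
        let ?Sw = "{w'. fst w' = w \<and> (w', (v,i)) \<in> reinf_edges f Rs E}"
        have "maj tb (image_mset (\<lambda>w'. ?msg w' (v,i)) (mset_set ?Sw)) = ?m0"
        proof (cases "same_region Rs w v")
          case sr: True
          then obtain S' where S': "S' \<in> Rs" "w \<in> S'" "v \<in> S'" unfolding same_region_def by blast
          have "S' = S" using part_unique[OF part S'(1) S(1) S'(3) S(2)] .
          then have xw: "\<not> x (w, i)" using S S' by auto
          have Sw: "?Sw = {(w, i)}" using True S(3) sr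
            by (auto simp: reinf_edges_def)
          have "?st (w, i) = exec E A inp t w"
            using IH[OF wV S(1) _ S(3) S(4)] S'(2) \<open>S' = S\<close> by simp
          then show ?thesis using Sw xw by (simp add: maj_def)
        next
          case nsr: False
          have Sw: "?Sw = (\<lambda>j. (w, j)) ` {..<ell f}" using True nsr S(3)
            by (auto simp: reinf_edges_def)
          obtain S' where S': "S' \<in> Rs" "w \<in> S'" using part_ex[OF part wV] by blast
          let ?J = "{j. j < ell f \<and> (\<forall>u\<in>S'. \<not> x (u, j))}"
          have cJ: "f + 1 \<le> card ?J" using good S' by blast
          have sub: "(\<lambda>j. (w, j)) ` ?J \<subseteq> {w' \<in> ?Sw. ?msg w' (v,i) = ?m0}"
          proof
            fix z assume "z \<in> (\<lambda>j. (w, j)) ` ?J"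
            then obtain j where j: "z = (w, j)" "j < ell f" "\<forall>u\<in>S'. \<not> x (u, j)" by blast
            have "?st (w, j) = exec E A inp t w" using IH[OF wV S'(1) S'(2) j(2) j(3)] .
            note stj = this
            have xj: "\<not> x (w,j)" using j(3) S'(2) by blast
            have inS: "(w,j) \<in> ?Sw" unfolding Sw using j(2) by blast
            have msg: "?msg (w,j) (v,i) = ?m0" using xj stj by simp
            show "z \<in> {w' \<in> ?Sw. ?msg w' (v,i) = ?m0}"
              unfolding j(1) by (rule CollectI, rule conjI[OF inS msg])
          qed
          have finSw: "finite ?Sw" using Sw by simp
          have fin2: "finite {w' \<in> ?Sw. ?msg w' (v,i) = ?m0}"
            by (rule finite_subset[OF _ finSw], blast)
          have "card ?J = card ((\<lambda>j. (w, j)) ` ?J)" by (intro card_image[symmetric]) (auto simp: inj_on_def)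
          also have "\<dots> \<le> card {w' \<in> ?Sw. ?msg w' (v,i) = ?m0}"
            by (rule card_mono[OF fin2 sub])
          finally have c0: "card ?J \<le> card {w' \<in> ?Sw. ?msg w' (v,i) = ?m0}" .
          have c1: "f + 1 \<le> count (image_mset (\<lambda>w'. ?msg w' (v,i)) (mset_set ?Sw)) ?m0"
            using count_image_mset_eq_card_vimage[OF finSw, of "\<lambda>w'. ?msg w' (v,i)" ?m0] c0 cJ by linarith
          have "card ?Sw = ell f" using Sw by (simp add: card_image inj_on_def)
          then have "size (image_mset (\<lambda>w'. ?msg w' (v,i)) (mset_set ?Sw)) = ell f"
            by (simp only: size_image_mset size_mset_set)
          then show ?thesis using c1 by (intro maj_eq) linarith
        qed
        then show ?thesis using True by simp
      qed
    qed
    have st: "?st (v, i) = exec E A inp t v" using IH[OF vV S(1) S(2) S(3) S(4)] .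
    show "rexec f Rs E A tb {v'. x v'} adv inp (Suc t) (v, i) = exec E A inp (Suc t) v"
      unfolding rexec.simps exec.simps Let_def fst_conv msgs[unfolded fst_conv] st by (rule refl)
  qed
qed





lemma prob_coord:
  assumes "finite A" "D \<subseteq> A" "0 \<le> p" "p \<le> 1"
  shows "measure_pmf.prob (Pi_pmf A False (\<lambda>_. bernoulli_pmf p)) {x. \<forall>d\<in>D. x d} = p ^ card D"
proof -
  have "{x. \<forall>d\<in>D. x d} = Pi A (\<lambda>a. if a \<in> D then {True} else UNIV)"
    using assms(2) by (auto simp: Pi_def)
  then have "measure_pmf.prob (Pi_pmf A False (\<lambda>_. bernoulli_pmf p)) {x. \<forall>d\<in>D. x d}
     = (\<Prod>a\<in>A. measure_pmf.prob (bernoulli_pmf p) (if a \<in> D then {True} else UNIV))"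
    using assms(1) by (simp add: measure_Pi_pmf_Pi)
  also have "\<dots> = (\<Prod>a\<in>A. if a \<in> D then p else 1)"
    using assms(3,4) by (intro prod.cong) (auto simp: measure_pmf_single)
  also have "\<dots> = p ^ card D"
    using assms(1,2) by (simp add: prod.If_cases Int_absorb1)
  finally show ?thesis .
qed

lemma prob_pair_times:
  "measure_pmf.prob (pair_pmf M N) (A \<times> B) = measure_pmf.prob M A * measure_pmf.prob N B"
proof -
  have "measure_pmf.prob (pair_pmf M N) (A \<times> B) = measure_pmf.prob (pair_pmf M N) ((A \<times> B) \<inter> set_pmf (pair_pmf M N))"
    by (rule measure_Int_set_pmf[symmetric])
  also have "(A \<times> B) \<inter> set_pmf (pair_pmf M N) = (A \<inter> set_pmf M) \<times> (B \<inter> set_pmf N)"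
    by auto
  also have "measure_pmf.prob (pair_pmf M N) \<dots> = measure_pmf.prob M (A \<inter> set_pmf M) * measure_pmf.prob N (B \<inter> set_pmf N)"
    by (intro measure_pmf_prob_product) auto
  finally show ?thesis by (simp add: measure_Int_set_pmf)
qed

lemma prob_block:
  assumes "finite W" "finite I"
  shows "measure_pmf.prob (Pi_pmf (W \<times> I) False (\<lambda>_. q)) {x. \<forall>w\<in>W. Q w (\<lambda>i. x (w, i))}
       = (\<Prod>w\<in>W. measure_pmf.prob (Pi_pmf I False (\<lambda>_. q)) {y. Q w y})"
  using assms(1)
proof (induction rule: finite_induct)
  case empty
  then show ?case by simp
next
  case (insert w W)
  let ?M = "Pi_pmf ({w} \<times> I) False (\<lambda>_. q)"
  let ?N = "Pi_pmf (W \<times> I) False (\<lambda>_. q)"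
  let ?h = "\<lambda>(g,h) z. if z \<in> {w} \<times> I then g z else h z"
  have eq: "insert w W \<times> I = ({w} \<times> I) \<union> (W \<times> I)" by auto
  have PU: "Pi_pmf (insert w W \<times> I) False (\<lambda>_. q) = map_pmf ?h (pair_pmf ?M ?N)"
    unfolding eq using insert.hyps assms(2) by (intro Pi_pmf_union) auto
  let ?A = "{g. Q w (\<lambda>i. g (w, i))}"
  let ?B = "{h. \<forall>w'\<in>W. Q w' (\<lambda>i. h (w', i))}"
  have sM: "\<And>g z. g \<in> set_pmf ?M \<Longrightarrow> z \<notin> {w} \<times> I \<Longrightarrow> g z = False"
    using set_Pi_pmf_subset[of "{w} \<times> I" False "\<lambda>_. q"] assms(2) by auto
  have sN: "\<And>g z. g \<in> set_pmf ?N \<Longrightarrow> z \<notin> W \<times> I \<Longrightarrow> g z = False"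
    using set_Pi_pmf_subset[of "W \<times> I" False "\<lambda>_. q"] assms(2) insert.hyps by auto
  have "measure_pmf.prob (Pi_pmf (insert w W \<times> I) False (\<lambda>_. q)) {x. \<forall>w\<in>insert w W. Q w (\<lambda>i. x (w, i))}
      = measure_pmf.prob (pair_pmf ?M ?N) (?h -` {x. \<forall>w\<in>insert w W. Q w (\<lambda>i. x (w, i))})"
    unfolding PU by simp
  also have "\<dots> = measure_pmf.prob (pair_pmf ?M ?N) (?A \<times> ?B)"
  proof (intro measure_prob_cong_0)
    have key: "z \<in> set_pmf (pair_pmf ?M ?N) \<Longrightarrow> (z \<in> ?h -` {x. \<forall>w\<in>insert w W. Q w (\<lambda>i. x (w, i))}) = (z \<in> ?A \<times> ?B)" for z
    proof -
      assume z: "z \<in> set_pmf (pair_pmf ?M ?N)"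
      obtain g h where gh: "z = (g, h)" by (cases z)
      have g: "g \<in> set_pmf ?M" and h: "h \<in> set_pmf ?N" using z gh by auto
      have e1: "(\<lambda>i. ?h (g,h) (w, i)) = (\<lambda>i. g (w, i))"
        using sM[OF g] sN[OF h] by (auto simp: fun_eq_iff)
      have e2: "w' \<in> W \<Longrightarrow> (\<lambda>i. ?h (g,h) (w', i)) = (\<lambda>i. h (w', i))" for w'
        using insert.hyps by (auto simp: fun_eq_iff)
      show ?thesis unfolding gh using e1 e2 by (auto simp del: split_paired_All simp add: Ball_def)
    qed
    show "\<And>x. x \<in> ?h -` {x. \<forall>w\<in>insert w W. Q w (\<lambda>i. x (w, i))} - ?A \<times> ?B \<Longrightarrow> pmf (pair_pmf ?M ?N) x = 0"
      using key by (meson DiffD1 DiffD2 set_pmf_iff)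
    show "\<And>x. x \<in> ?A \<times> ?B - ?h -` {x. \<forall>w\<in>insert w W. Q w (\<lambda>i. x (w, i))} \<Longrightarrow> pmf (pair_pmf ?M ?N) x = 0"
      using key by (meson DiffD1 DiffD2 set_pmf_iff)
  qed
  also have "\<dots> = measure_pmf.prob ?M ?A * measure_pmf.prob ?N ?B"
    by (rule prob_pair_times)
  also have "measure_pmf.prob ?M ?A = measure_pmf.prob (Pi_pmf I False (\<lambda>_. q)) {y. Q w y}"
  proof -
    have "Pi_pmf I False (\<lambda>_. q) = map_pmf (\<lambda>g. g \<circ> Pair w) ?M"
      using assms(2) by (intro Pi_pmf_bij_betw) (auto simp: bij_betw_def inj_on_def)
    then show ?thesis by (simp add: vimage_def o_def)
  qed
  also have "measure_pmf.prob ?N ?B = (\<Prod>w\<in>W. measure_pmf.prob (Pi_pmf I False (\<lambda>_. q)) {y. Q w y})"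
    by (rule insert.IH)
  finally show ?case using insert.hyps by simp
qed




lemma region_bad_bound:
  assumes finV: "finite V" and SV: "S \<subseteq> V" and p: "0 \<le> p" "p \<le> 1"
  shows "measure_pmf.prob (fault_pmf f V p) {x. card {i. i < ell f \<and> (\<forall>v\<in>S. \<not> x (v, i))} < f + 1}
         \<le> real (ell f choose (f + 1)) * (real (card S) * p) ^ (f + 1)"
proof -
  let ?M = "fault_pmf f V p"
  let ?K = "{I. I \<subseteq> {..<ell f} \<and> card I = f + 1}"
  let ?Ev = "\<lambda>I g. {x. \<forall>d\<in>(\<lambda>i. (g i, i)) ` I. x d}"
  have finS: "finite S" using finV SV finite_subset by blast
  have finK: "finite ?K" by (rule finite_subset[of _ "Pow {..<ell f}"]) auto
  have cardK: "card ?K = ell f choose (f + 1)"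
    using n_subsets[of "{..<ell f}" "f+1"] by simp
  have sub: "{x. card {i. i < ell f \<and> (\<forall>v\<in>S. \<not> x (v, i))} < f + 1}
        \<subseteq> (\<Union>I\<in>?K. \<Union>g\<in>PiE I (\<lambda>_. S). ?Ev I g)"
  proof
    fix x assume "x \<in> {x. card {i. i < ell f \<and> (\<forall>v\<in>S. \<not> x (v, i))} < f + 1}"
    then have c: "card {i. i < ell f \<and> (\<forall>v\<in>S. \<not> x (v, i))} < f + 1" by simp
    let ?C = "{i. i < ell f \<and> (\<forall>v\<in>S. \<not> x (v, i))}"
    let ?D = "{i. i < ell f \<and> (\<exists>v\<in>S. x (v, i))}"
    have DC: "?D = {..<ell f} - ?C" by auto
    have "card ?D = ell f - card ?C" unfolding DC by (subst card_Diff_subset) auto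
    then have "f + 1 \<le> card ?D" using c by simp
    then obtain I where I: "I \<subseteq> ?D" "card I = f + 1"
      by (rule obtain_subset_with_card_n)
    define g where "g = restrict (\<lambda>i. SOME v. v \<in> S \<and> x (v, i)) I"
    have gi: "i \<in> I \<Longrightarrow> g i \<in> S \<and> x (g i, i)" for i
    proof -
      assume "i \<in> I"
      have "i \<in> ?D" using subsetD[OF I(1) \<open>i \<in> I\<close>] .
      then have "\<exists>v. v \<in> S \<and> x (v, i)" by blast
      then have "(SOME v. v \<in> S \<and> x (v, i)) \<in> S \<and> x (SOME v. v \<in> S \<and> x (v, i), i)"
        by (rule someI_ex)
      then show ?thesis using \<open>i \<in> I\<close> unfolding g_def by simp
    qed
    have "I \<in> ?K" using I by auto
    moreover have "g \<in> PiE I (\<lambda>_. S)" using gi unfolding g_def by (auto simp: PiE_def)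
    moreover have "x \<in> ?Ev I g" using gi by auto
    ultimately show "x \<in> (\<Union>I\<in>?K. \<Union>g\<in>PiE I (\<lambda>_. S). ?Ev I g)" by blast
  qed
  have each: "measure_pmf.prob ?M (\<Union>g\<in>PiE I (\<lambda>_. S). ?Ev I g) \<le> real (card S) ^ (f + 1) * p ^ (f + 1)"
    if IK: "I \<in> ?K" for I
  proof -
    have finI: "finite I" using IK finite_subset by auto
    have "measure_pmf.prob ?M (\<Union>g\<in>PiE I (\<lambda>_. S). ?Ev I g) \<le> (\<Sum>g\<in>PiE I (\<lambda>_. S). measure_pmf.prob ?M (?Ev I g))"
      by (intro measure_pmf.finite_measure_subadditive_finite) (auto intro!: finite_PiE finI finS)
    also have "\<dots> = (\<Sum>g\<in>PiE I (\<lambda>_. S). p ^ (f + 1))"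
    proof (intro sum.cong refl)
      fix g assume g: "g \<in> PiE I (\<lambda>_. S)"
      have inj: "inj_on (\<lambda>i. (g i, i)) I" by (auto simp: inj_on_def)
      have "(\<lambda>i. (g i, i)) ` I \<subseteq> V \<times> {..<ell f}" using g IK SV by (auto simp: PiE_def Pi_def)
      then have "measure_pmf.prob ?M (?Ev I g) = p ^ card ((\<lambda>i. (g i, i)) ` I)"
        unfolding fault_pmf_def using finV p by (intro prob_coord) auto
      then show "measure_pmf.prob ?M (?Ev I g) = p ^ (f + 1)"
        using card_image[OF inj] IK by simp
    qed
    also have "\<dots> = real (card S) ^ (f + 1) * p ^ (f + 1)"
      using IK by (simp add: card_PiE finI)
    finally show ?thesis .
  qed
  have "measure_pmf.prob ?M {x. card {i. i < ell f \<and> (\<forall>v\<in>S. \<not> x (v, i))} < f + 1}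
        \<le> measure_pmf.prob ?M (\<Union>I\<in>?K. \<Union>g\<in>PiE I (\<lambda>_. S). ?Ev I g)"
    using sub by (intro measure_pmf.finite_measure_mono) auto
  also have "\<dots> \<le> (\<Sum>I\<in>?K. measure_pmf.prob ?M (\<Union>g\<in>PiE I (\<lambda>_. S). ?Ev I g))"
    by (intro measure_pmf.finite_measure_subadditive_finite finK) auto
  also have "\<dots> \<le> (\<Sum>I\<in>?K. real (card S) ^ (f + 1) * p ^ (f + 1))"
    by (intro sum_mono each)
  also have "\<dots> = real (ell f choose (f + 1)) * (real (card S) * p) ^ (f + 1)"
    using cardK by (simp add: power_mult_distrib)
  finally show ?thesis .
qed




lemma good_prob:
  assumes finV: "finite V" and part: "partition_on V Rs" and p: "0 \<le> p" "p \<le> 1"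
  shows "measure_pmf.prob (fault_pmf f V p) {x. \<forall>S\<in>Rs. f + 1 \<le> card {i. i < ell f \<and> (\<forall>v\<in>S. \<not> x (v, i))}}
         \<ge> 1 - real (card Rs) * real (ell f choose (f + 1)) * (real (Max (card ` Rs)) * p) ^ (f + 1)"
proof -
  let ?M = "fault_pmf f V p"
  let ?B = "\<lambda>S. {x. card {i. i < ell f \<and> (\<forall>v\<in>S. \<not> x (v, i))} < f + 1}"
  let ?G = "{x. \<forall>S\<in>Rs. f + 1 \<le> card {i. i < ell f \<and> (\<forall>v\<in>S. \<not> x (v, i))}}"
  have finRs: "finite Rs" using finV partition_onD1[OF part] by (metis finite_UnionD)
  have SV: "S \<in> Rs \<Longrightarrow> S \<subseteq> V" for S using partition_onD1[OF part] by blast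
  have compl: "UNIV - ?G = (\<Union>S\<in>Rs. ?B S)" by (auto simp: not_le)
  have "measure_pmf.prob ?M (UNIV - ?G) \<le> (\<Sum>S\<in>Rs. measure_pmf.prob ?M (?B S))"
    unfolding compl by (intro measure_pmf.finite_measure_subadditive_finite finRs) auto
  also have "\<dots> \<le> (\<Sum>S\<in>Rs. real (ell f choose (f + 1)) * (real (Max (card ` Rs)) * p) ^ (f + 1))"
  proof (intro sum_mono)
    fix S assume S: "S \<in> Rs"
    have "measure_pmf.prob ?M (?B S) \<le> real (ell f choose (f + 1)) * (real (card S) * p) ^ (f + 1)"
      by (rule region_bad_bound[OF finV SV[OF S] p])
    also have "\<dots> \<le> real (ell f choose (f + 1)) * (real (Max (card ` Rs)) * p) ^ (f + 1)"
    proof -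
      have "card S \<le> Max (card ` Rs)" using finRs S by (intro Max_ge) auto
      then have "real (card S) * p \<le> real (Max (card ` Rs)) * p" using p by (intro mult_right_mono) auto
      then have "(real (card S) * p) ^ (f + 1) \<le> (real (Max (card ` Rs)) * p) ^ (f + 1)"
        using p by (intro power_mono) auto
      then show ?thesis by (intro mult_left_mono) auto
    qed
    finally show "measure_pmf.prob ?M (?B S) \<le> real (ell f choose (f + 1)) * (real (Max (card ` Rs)) * p) ^ (f + 1)" .
  qed
  also have "\<dots> = real (card Rs) * real (ell f choose (f + 1)) * (real (Max (card ` Rs)) * p) ^ (f + 1)"
    by simp
  finally have le: "measure_pmf.prob ?M (UNIV - ?G) \<le> real (card Rs) * real (ell f choose (f + 1)) * (real (Max (card ` Rs)) * p) ^ (f + 1)" .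
  have "measure_pmf.prob ?M (UNIV - ?G) = 1 - measure_pmf.prob ?M ?G"
    using measure_pmf.prob_compl[of ?G ?M] by simp
  then show ?thesis using le by linarith
qed

lemma block_prob:
  assumes finV: "finite V" and WV: "W \<subseteq> V" and p: "0 \<le> p" "p \<le> 1"
  shows "measure_pmf.prob (fault_pmf f V p) {x. \<not> (\<exists>v\<in>W. f < card {i. i < ell f \<and> x (v, i)})}
         \<le> (1 - p ^ (f + 1)) ^ card W"
proof -
  let ?M = "fault_pmf f V p"
  let ?Q = "\<lambda>w (y :: nat \<Rightarrow> bool). w \<in> W \<longrightarrow> \<not> (\<forall>i\<in>{..<f+1}. y i)"
  have sub: "{x. \<not> (\<exists>v\<in>W. f < card {i. i < ell f \<and> x (v, i)})} \<subseteq> {x. \<forall>w\<in>V. ?Q w (\<lambda>i. x (w, i))}"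
  proof
    fix x assume x: "x \<in> {x. \<not> (\<exists>v\<in>W. f < card {i. i < ell f \<and> x (v, i)})}"
    show "x \<in> {x. \<forall>w\<in>V. ?Q w (\<lambda>i. x (w, i))}"
    proof (clarify)
      fix w assume w: "w \<in> V" "w \<in> W" and all: "\<forall>i\<in>{..<f+1}. x (w, i)"
      have "{..<f+1} \<subseteq> {i. i < ell f \<and> x (w, i)}" using all by auto
      then have "card {..<f+1} \<le> card {i. i < ell f \<and> x (w, i)}" by (intro card_mono) auto
      then have "f < card {i. i < ell f \<and> x (w, i)}" by simp
      then show False using x w by blast
    qed
  qed
  have "measure_pmf.prob ?M {x. \<not> (\<exists>v\<in>W. f < card {i. i < ell f \<and> x (v, i)})}
        \<le> measure_pmf.prob ?M {x. \<forall>w\<in>V. ?Q w (\<lambda>i. x (w, i))}"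
    using sub by (intro measure_pmf.finite_measure_mono) auto
  also have "\<dots> = (\<Prod>w\<in>V. measure_pmf.prob (Pi_pmf {..<ell f} False (\<lambda>_. bernoulli_pmf p)) {y. ?Q w y})"
    unfolding fault_pmf_def using finV by (intro prob_block) auto
  also have "\<dots> = (\<Prod>w\<in>V. if w \<in> W then 1 - p ^ (f + 1) else 1)"
  proof (intro prod.cong refl)
    fix w assume "w \<in> V"
    have c: "measure_pmf.prob (Pi_pmf {..<ell f} False (\<lambda>_. bernoulli_pmf p)) {y. \<forall>d\<in>{..<f+1}. y d} = p ^ (f + 1)"
      using prob_coord[of "{..<ell f}" "{..<f+1}" p] p by simp
    show "measure_pmf.prob (Pi_pmf {..<ell f} False (\<lambda>_. bernoulli_pmf p)) {y. ?Q w y} = (if w \<in> W then 1 - p ^ (f + 1) else 1)"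
    proof (cases "w \<in> W")
      case True
      have "{y. ?Q w y} = UNIV - {y. \<forall>d\<in>{..<f+1}. y d}" using True by auto
      then show ?thesis using True c measure_pmf.prob_compl[of "{y. \<forall>d\<in>{..<f+1}. y d}" "Pi_pmf {..<ell f} False (\<lambda>_. bernoulli_pmf p)"]
        by simp
    next
      case False
      then have "{y. ?Q w y} = UNIV" by auto
      then show ?thesis using False by simp
    qed
  qed
  also have "\<dots> = (1 - p ^ (f + 1)) ^ card W"
    using finV WV by (simp add: prod.If_cases Int_absorb1)
  finally show ?thesis .
qed




lemma good_sim:
  assumes edges: "E \<subseteq> V \<times> V" and part: "partition_on V Rs"
    and good: "\<forall>S\<in>Rs. f + 1 \<le> card {i. i < ell f \<and> (\<forall>v\<in>S. \<not> x (v, i))}"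
  shows "simulates f V E Rs A tb {v'. x v'} adv inp"
  unfolding simulates_def
proof
  fix v assume vV: "v \<in> V"
  obtain S where S: "S \<in> Rs" "v \<in> S" using part_ex[OF part vV] by blast
  let ?T = "{i. i < ell f \<and> (\<forall>v\<in>S. \<not> x (v, i))}"
  have cT: "f + 1 \<le> card ?T" using good S(1) by (rule bspec)
  have core: "\<And>i t. i \<in> ?T \<Longrightarrow> rexec f Rs E A tb {v'. x v'} adv inp t (v, i) = exec E A inp t v"
  proof -
    fix i t assume i: "i \<in> ?T"
    have "(\<exists>S\<in>Rs. v \<in> S \<and> i < ell f \<and> (\<forall>u\<in>S. \<not> x (u, i)))" using S i by blast
    then show "rexec f Rs E A tb {v'. x v'} adv inp t (v, i) = exec E A inp t v"
      using sim_core[OF edges part good, of A tb adv inp t, rule_format, OF vV] by simp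
  qed
  have "?T \<subseteq> {..<ell f}" by auto
  moreover have "2 * card ?T > ell f" using cT by linarith
  moreover have "\<forall>i\<in>?T. (v, i) \<notin> {v'. x v'} \<and> (\<forall>t. rexec f Rs E A tb {v'. x v'} adv inp t (v, i) = exec E A inp t v)"
  proof
    fix i assume i: "i \<in> ?T"
    then have "\<not> x (v, i)" using S(2) by simp
    then show "(v, i) \<notin> {v'. x v'} \<and> (\<forall>t. rexec f Rs E A tb {v'. x v'} adv inp t (v, i) = exec E A inp t v)"
      using core[OF i] by simp
  qed
  ultimately show "\<exists>T\<subseteq>{..<ell f}. ell f < 2 * card T \<and>
        (\<forall>i\<in>T. (v, i) \<notin> {v'. x v'} \<and> (\<forall>t. rexec f Rs E A tb {v'. x v'} adv inp t (v, i) = exec E A inp t v))"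
    by (intro exI[of _ ?T]) (simp only:)
qed

lemma bad_nosim:
  assumes vV: "v \<in> V" and bad: "f < card {i. i < ell f \<and> x (v, i)}"
  shows "\<not> simulates f V E Rs A tb {v'. x v'} adv inp"
proof
  assume "simulates f V E Rs A tb {v'. x v'} adv inp"
  then obtain T where T: "T \<subseteq> {..<ell f}" "ell f < 2 * card T" "\<forall>i\<in>T. (v, i) \<notin> {v'. x v'}"
  proof -
    from \<open>simulates f V E Rs A tb {v'. x v'} adv inp\<close> have
      "\<exists>T \<subseteq> {..<ell f}. 2 * card T > ell f \<and>
        (\<forall>i\<in>T. (v, i) \<notin> {v'. x v'} \<and> (\<forall>t. rexec f Rs E A tb {v'. x v'} adv inp t (v, i) = exec E A inp t v))"
      unfolding simulates_def using vV by (rule bspec)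
    then show ?thesis
    proof (elim exE conjE)
      fix T assume a: "T \<subseteq> {..<ell f}" "ell f < 2 * card T"
        "\<forall>i\<in>T. (v, i) \<notin> {v'. x v'} \<and> (\<forall>t. rexec f Rs E A tb {v'. x v'} adv inp t (v, i) = exec E A inp t v)"
      have "\<forall>i\<in>T. (v, i) \<notin> {v'. x v'}" using a(3) by simp
      then show ?thesis by (rule that[OF a(1) a(2)])
    qed
  qed
  let ?X = "{i. i < ell f \<and> x (v, i)}"
  have disj: "T \<inter> ?X = {}" using T(3) by auto
  have finT: "finite T" using T(1) finite_subset by blast
  have "card (T \<union> ?X) = card T + card ?X" using disj finT by (intro card_Un_disjoint) auto
  moreover have "card (T \<union> ?X) \<le> card {..<ell f}" using T(1) by (intro card_mono) auto
  ultimately have "card T + card ?X \<le> ell f" by simp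
  then show False using bad T(2) by linarith
qed

lemma struct_facts:
  assumes finV: "finite V" and part: "partition_on V Rs" and ne: "V \<noteq> {}"
  shows "finite Rs" "Rs \<noteq> {}" "1 \<le> Min (card ` Rs)" "Min (card ` Rs) \<le> Max (card ` Rs)"
        "card Rs * Min (card ` Rs) \<le> card V"
proof -
  have U: "V = \<Union>Rs" using partition_onD1[OF part] .
  show finRs: "finite Rs" using finV U by (metis finite_UnionD)
  show neRs: "Rs \<noteq> {}" using ne U by auto
  have finS: "\<And>S. S \<in> Rs \<Longrightarrow> finite S" using finV U by (metis Union_upper finite_subset)
  have nS: "\<And>S. S \<in> Rs \<Longrightarrow> S \<noteq> {}" using partition_onD3[OF part] by auto
  have "\<forall>k\<in>card ` Rs. 1 \<le> k" using finS nS by (auto simp: Suc_le_eq card_gt_0_iff)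
  then show "1 \<le> Min (card ` Rs)" using finRs neRs by (subst Min_ge_iff) auto
  show "Min (card ` Rs) \<le> Max (card ` Rs)"
  proof -
    obtain S where S: "S \<in> Rs" using neRs by blast
    have "Min (card ` Rs) \<le> card S" using finRs S by (intro Min_le) auto
    also have "card S \<le> Max (card ` Rs)" using finRs S by (intro Max_ge) auto
    finally show ?thesis .
  qed
  have "card V = sum card Rs" unfolding U by (intro card_Union_disjoint partition_onD2[OF part] finS)
  also have "\<dots> \<ge> (\<Sum>S\<in>Rs. Min (card ` Rs))" using finRs by (intro sum_mono Min_le) auto
  finally show "card Rs * Min (card ` Rs) \<le> card V" by (simp add: mult.commute)
qed




lemma powr_pow_inv:
  fixes y :: real assumes "y > 0"
  shows "(y powr (-1 / (real f + 1))) ^ (f + 1) = 1 / y"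
proof -
  have "(y powr (-1 / (real f + 1))) ^ (f + 1) = (y powr (-1 / (real f + 1))) powr (real (f + 1))"
    by (rule powr_realpow[symmetric]) (use assms in simp)
  also have "\<dots> = y powr (-1 / (real f + 1) * real (f + 1))" by (simp add: powr_powr)
  also have "-1 / (real f + 1) * real (f + 1) = -1" by (simp add: field_simps)
  also have "y powr (-1) = 1 / y" using assms by (simp add: powr_minus_divide)
  finally show ?thesis .
qed

lemma bound_a:
  fixes n r R K C c p :: real
  assumes n: "n > 0" and r: "r \<ge> 1" and R: "R \<ge> 1" and K: "K \<ge> 0" and Kr: "K * r \<le> n"
    and p0: "0 \<le> p" and pc: "p \<le> c * ((n / r) powr (-1 / (real f + 1)) / R)"
    and c: "0 < c" "c \<le> 1" and C: "C \<ge> 0"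
  shows "K * C * (R * p) ^ (f + 1) \<le> C * c"
proof -
  define X where "X = (n / r) powr (-1 / (real f + 1))"
  have nr: "n / r > 0" using n r by (intro divide_pos_pos) auto
  have X0: "X > 0" unfolding X_def using n r by simp
  have hRp: "R * p \<le> c * X" using pc R unfolding X_def by (simp add: field_simps)
  have h1: "(R * p) ^ (f + 1) \<le> (c * X) ^ (f + 1)" using hRp p0 R by (intro power_mono) auto
  have hX: "X ^ (f + 1) = r / n" unfolding X_def using powr_pow_inv[OF nr, of f] by simp
  have hc: "c ^ (f + 1) \<le> c"
  proof -
    have "c ^ f \<le> 1" using c by (intro power_le_one) auto
    then have "c * c ^ f \<le> c * 1" using c by (intro mult_left_mono) auto
    then show ?thesis by simp
  qed
  have "K * C * (R * p) ^ (f + 1) \<le> K * C * (c * X) ^ (f + 1)"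
    using h1 K C by (intro mult_left_mono) auto
  also have "\<dots> = K * C * (c ^ (f + 1) * X ^ (f + 1))" by (simp only: power_mult_distrib)
  also have "\<dots> = C * c ^ (f + 1) * (K * r / n)" unfolding hX by simp
  also have "\<dots> \<le> C * c ^ (f + 1) * 1"
  proof (intro mult_left_mono)
    show "K * r / n \<le> 1" using Kr n by simp
    show "0 \<le> C * c ^ (f + 1)" using C c by simp
  qed
  also have "\<dots> \<le> C * c" using hc C by (simp add: mult_left_mono)
  finally show ?thesis .
qed

lemma bound_b:
  fixes n c0 c p :: real and m :: nat
  assumes n: "n > 0" and m: "c0 * n \<le> real m" and c0: "c0 > 0"
    and pc: "c * n powr (-1 / (real f + 1)) \<le> p" and c: "c \<ge> 1" and p1: "p \<le> 1"
  shows "(1 - p ^ (f + 1)) ^ m \<le> 1 / (1 + c0 * c)"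
proof -
  define X where "X = n powr (-1 / (real f + 1))"
  have X0: "X > 0" unfolding X_def using n by simp
  have p0: "p \<ge> 0" using pc X0 c unfolding X_def[symmetric] by (smt (verit) mult_pos_pos)
  have hX: "X ^ (f + 1) = 1 / n" unfolding X_def using powr_pow_inv[OF n, of f] by simp
  have hc: "c \<le> c ^ (f + 1)"
  proof -
    have "1 \<le> c ^ f" using c by (intro one_le_power) auto
    then have "c * 1 \<le> c * c ^ f" using c by (intro mult_left_mono) auto
    then show ?thesis by simp
  qed
  have "(c * X) ^ (f + 1) \<le> p ^ (f + 1)" using pc X0 c unfolding X_def[symmetric]
    by (intro power_mono) auto
  moreover have "(c * X) ^ (f + 1) = c ^ (f + 1) / n" by (simp only: power_mult_distrib hX) simp
  ultimately have py: "c ^ (f + 1) / n \<le> p ^ (f + 1)" by simp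
  have y1: "p ^ (f + 1) \<le> 1" using p0 p1 by (intro power_le_one) auto
  let ?y = "p ^ (f + 1)"
  have "(1 - ?y) ^ m \<le> (exp (- ?y)) ^ m"
    using y1 exp_ge_add_one_self[of "- ?y"] by (intro power_mono) auto
  also have "\<dots> = exp (- (real m * ?y))" by (simp add: exp_of_nat_mult[symmetric])
  also have "\<dots> \<le> exp (- (c0 * c))"
  proof -
    have "c0 * c = (c0 * n) * (c / n)" using n by simp
    also have "\<dots> \<le> real m * (c ^ (f + 1) / n)"
    proof (intro mult_mono m)
      show "c / n \<le> c ^ (f + 1) / n" using hc n by (simp add: divide_right_mono)
      show "0 \<le> real m" by simp
      show "0 \<le> c / n" using c n by simp
    qed
    also have "\<dots> \<le> real m * ?y" using py by (intro mult_left_mono) auto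
    finally show ?thesis by simp
  qed
  also have "\<dots> \<le> 1 / (1 + c0 * c)"
  proof -
    have pos: "0 < 1 + c0 * c" using c0 c by (simp add: add_pos_nonneg)
    have "1 + c0 * c \<le> exp (c0 * c)" by (rule exp_ge_add_one_self)
    then have "1 / exp (c0 * c) \<le> 1 / (1 + c0 * c)" using pos by (intro divide_left_mono) auto
    then show ?thesis by (simp add: exp_minus field_simps)
  qed
  finally show ?thesis .
qed




theorem theorem9:
  fixes f :: nat
    and V :: "nat \<Rightarrow> 'v set" and E :: "nat \<Rightarrow> ('v \<times> 'v) set" and Rs :: "nat \<Rightarrow> 'v set set"
    and p :: "nat \<Rightarrow> real" and tb :: "'m multiset \<Rightarrow> 'm"
  assumes fin: "\<And>j. finite (V j)"
    and edges: "\<And>j. E j \<subseteq> V j \<times> V j"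
    and part: "\<And>j. partition_on (V j) (Rs j)"
    and prob: "\<And>j. 0 \<le> p j \<and> p j \<le> 1"
    and ninf: "filterlim (\<lambda>j. card (V j)) at_top sequentially"
    and Rp: "(\<lambda>j. real (Max (card ` Rs j)) * p j) \<in> o(\<lambda>_. 1)"
  shows "(p \<in> o(\<lambda>j. (real (card (V j)) / real (Min (card ` Rs j))) powr (-1 / (real f + 1))
                     / real (Max (card ` Rs j)))
           \<longrightarrow> ((\<lambda>j. measure_pmf.prob (fault_pmf f (V j) (p j))
                   {x. \<forall>S\<in>Rs j. f + 1 \<le> card {i. i < ell f \<and> (\<forall>v\<in>S. \<not> x (v, i))}}) \<longlonglongrightarrow> 1)
             \<and> (\<forall>A :: nat \<Rightarrow> ('v,'s,'m,'i) alg. valid f V E Rs A tb p))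
       \<and> ((\<lambda>j. real (card {v\<in>V j. \<exists>w. (v, w) \<in> E j})) \<in> \<Omega>(\<lambda>j. real (card (V j)))
           \<and> (\<lambda>j. real (Max (card ` Rs j))) \<in> O(\<lambda>_. 1)
           \<and> p \<in> \<omega>(\<lambda>j. real (card (V j)) powr (-1 / (real f + 1)))
           \<longrightarrow> ((\<lambda>j. measure_pmf.prob (fault_pmf f (V j) (p j))
                   {x. \<exists>v\<in>V j. (\<exists>w. (v, w) \<in> E j) \<and> f < card {i. i < ell f \<and> x (v, i)}}) \<longlonglongrightarrow> 1)
             \<and> (\<forall>A :: nat \<Rightarrow> ('v,'s,'m,'i) alg. \<not> valid f V E Rs A tb p))"
proof -
  have evne: "eventually (\<lambda>j. V j \<noteq> {}) sequentially"
  proof -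
    have "eventually (\<lambda>j. 1 \<le> card (V j)) sequentially" using ninf by (simp add: filterlim_at_top)
    then show ?thesis by eventually_elim auto
  qed
  define C where "C = real (ell f choose (f + 1))"
  have C0: "C \<ge> 0" unfolding C_def by simp
  define G where "G = (\<lambda>j. measure_pmf.prob (fault_pmf f (V j) (p j))
                   {x. \<forall>S\<in>Rs j. f + 1 \<le> card {i. i < ell f \<and> (\<forall>v\<in>S. \<not> x (v, i))}})"
  have partA: "p \<in> o(\<lambda>j. (real (card (V j)) / real (Min (card ` Rs j))) powr (-1 / (real f + 1))
                     / real (Max (card ` Rs j)))
           \<longrightarrow> (G \<longlonglongrightarrow> 1) \<and> (\<forall>A :: nat \<Rightarrow> ('v,'s,'m,'i) alg. valid f V E Rs A tb p)"
  proof
    assume po: "p \<in> o(\<lambda>j. (real (card (V j)) / real (Min (card ` Rs j))) powr (-1 / (real f + 1))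
                     / real (Max (card ` Rs j)))"
    define b where "b = (\<lambda>j. real (card (Rs j)) * C * (real (Max (card ` Rs j)) * p j) ^ (f + 1))"
    have b0: "b \<longlonglongrightarrow> 0"
    proof (rule tendstoI)
      fix e :: real assume e: "0 < e"
      define c where "c = min 1 (e / (2 * (C + 1)))"
      have c: "0 < c" "c \<le> 1" using e C0 unfolding c_def by auto
      have ev: "eventually (\<lambda>j. norm (p j) \<le> c * norm ((real (card (V j)) / real (Min (card ` Rs j))) powr (-1 / (real f + 1))
                     / real (Max (card ` Rs j)))) at_top"
        by (rule landau_o.smallD[OF po c(1)])
      show "eventually (\<lambda>j. dist (b j) 0 < e) sequentially"
        using ev evne
      proof eventually_elim
        case (elim j)
        have sf: "finite (Rs j)" "Rs j \<noteq> {}" "1 \<le> Min (card ` Rs j)" "Min (card ` Rs j) \<le> Max (card ` Rs j)"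
          "card (Rs j) * Min (card ` Rs j) \<le> card (V j)"
          using struct_facts[OF fin part elim(2)] by auto
        have n0: "real (card (V j)) > 0" using fin[of j] elim(2) by (simp add: card_gt_0_iff)
        have p0: "0 \<le> p j" using prob[of j] by simp
        have g0: "0 \<le> (real (card (V j)) / real (Min (card ` Rs j))) powr (-1 / (real f + 1))
                     / real (Max (card ` Rs j))" by simp
        have pc: "p j \<le> c * ((real (card (V j)) / real (Min (card ` Rs j))) powr (-1 / (real f + 1))
                     / real (Max (card ` Rs j)))"
          using elim(1) p0 g0 by simp
        have Kr: "real (card (Rs j)) * real (Min (card ` Rs j)) \<le> real (card (V j))"
          using sf(5) by (metis of_nat_le_iff of_nat_mult)
        have r1: "1 \<le> real (Min (card ` Rs j))" using sf(3) by simp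
        have R1: "1 \<le> real (Max (card ` Rs j))" using sf(3) sf(4) by simp
        have "b j \<le> C * c" unfolding b_def
          by (rule bound_a[OF n0 r1 R1 _ Kr p0 pc c C0]) simp
        also have "C * c \<le> C * (e / (2 * (C + 1)))" using C0 unfolding c_def by (intro mult_left_mono) auto
        also have "\<dots> < e"
        proof -
          have d: "2 * (C + 1) > 0" using C0 by simp
          have q: "C / (2 * (C + 1)) < 1" using d C0 by (simp add: divide_less_eq)
          have "C * (e / (2 * (C + 1))) = e * (C / (2 * (C + 1)))" by simp
          also have "\<dots> < e * 1" using q e by (intro mult_strict_left_mono) auto
          finally show ?thesis by simp
        qed
        finally have "b j < e" .
        moreover have "0 \<le> b j" unfolding b_def using C0 p0 by simp
        ultimately show "dist (b j) 0 < e" by simp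
      qed
    qed
    have G1: "G \<longlonglongrightarrow> 1"
    proof (rule tendsto_sandwich[of "\<lambda>j. 1 - b j" G sequentially "\<lambda>_. 1"])
      show "eventually (\<lambda>j. 1 - b j \<le> G j) sequentially"
        unfolding G_def b_def C_def using good_prob[OF fin part] prob by (intro always_eventually) auto
      show "eventually (\<lambda>j. G j \<le> 1) sequentially" unfolding G_def by (intro always_eventually) auto
      show "(\<lambda>j. 1 - b j) \<longlonglongrightarrow> 1" using tendsto_diff[OF tendsto_const b0, of 1] by simp
    qed simp
    have "valid f V E Rs A tb p" for A :: "nat \<Rightarrow> ('v,'s,'m,'i) alg"
      unfolding valid_def
    proof (rule tendsto_sandwich[of G _ sequentially "\<lambda>_. 1"])
      show "eventually (\<lambda>j. G j \<le> measure_pmf.prob (fault_pmf f (V j) (p j))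
        {x. \<forall>adv inp. simulates f (V j) (E j) (Rs j) (A j) tb {v'. x v'} adv inp}) sequentially"
      proof (intro always_eventually allI)
        fix j
        have "{x. \<forall>S\<in>Rs j. f + 1 \<le> card {i. i < ell f \<and> (\<forall>v\<in>S. \<not> x (v, i))}}
          \<subseteq> {x. \<forall>adv inp. simulates f (V j) (E j) (Rs j) (A j) tb {v'. x v'} adv inp}"
        proof
          fix x assume "x \<in> {x. \<forall>S\<in>Rs j. f + 1 \<le> card {i. i < ell f \<and> (\<forall>v\<in>S. \<not> x (v, i))}}"
          then have gx: "\<forall>S\<in>Rs j. f + 1 \<le> card {i. i < ell f \<and> (\<forall>v\<in>S. \<not> x (v, i))}" by simp
          have "\<forall>adv inp. simulates f (V j) (E j) (Rs j) (A j) tb {v'. x v'} adv inp"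
            using good_sim[OF edges part gx] by blast
          then show "x \<in> {x. \<forall>adv inp. simulates f (V j) (E j) (Rs j) (A j) tb {v'. x v'} adv inp}" by simp
        qed
        then show "G j \<le> measure_pmf.prob (fault_pmf f (V j) (p j))
          {x. \<forall>adv inp. simulates f (V j) (E j) (Rs j) (A j) tb {v'. x v'} adv inp}"
          unfolding G_def by (intro measure_pmf.finite_measure_mono) auto
      qed
      show "eventually (\<lambda>j. measure_pmf.prob (fault_pmf f (V j) (p j))
        {x. \<forall>adv inp. simulates f (V j) (E j) (Rs j) (A j) tb {v'. x v'} adv inp} \<le> 1) sequentially"
        by (intro always_eventually) auto
    qed (use G1 in simp_all)
    then show "(G \<longlonglongrightarrow> 1) \<and> (\<forall>A :: nat \<Rightarrow> ('v,'s,'m,'i) alg. valid f V E Rs A tb p)"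
      using G1 by blast
  qed
  have partB: "(\<lambda>j. real (card {v\<in>V j. \<exists>w. (v, w) \<in> E j})) \<in> \<Omega>(\<lambda>j. real (card (V j)))
           \<and> (\<lambda>j. real (Max (card ` Rs j))) \<in> O(\<lambda>_. 1)
           \<and> p \<in> \<omega>(\<lambda>j. real (card (V j)) powr (-1 / (real f + 1)))
           \<longrightarrow> ((\<lambda>j. measure_pmf.prob (fault_pmf f (V j) (p j))
                   {x. \<exists>v\<in>V j. (\<exists>w. (v, w) \<in> E j) \<and> f < card {i. i < ell f \<and> x (v, i)}}) \<longlonglongrightarrow> 1)
             \<and> (\<forall>A :: nat \<Rightarrow> ('v,'s,'m,'i) alg. \<not> valid f V E Rs A tb p)"
  proof
    assume hyp: "(\<lambda>j. real (card {v\<in>V j. \<exists>w. (v, w) \<in> E j})) \<in> \<Omega>(\<lambda>j. real (card (V j)))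
           \<and> (\<lambda>j. real (Max (card ` Rs j))) \<in> O(\<lambda>_. 1)
           \<and> p \<in> \<omega>(\<lambda>j. real (card (V j)) powr (-1 / (real f + 1)))"
    define W where "W = (\<lambda>j. {v\<in>V j. \<exists>w. (v, w) \<in> E j})"
    have WV: "W j \<subseteq> V j" for j unfolding W_def by auto
    from hyp have Om: "(\<lambda>j. real (card (W j))) \<in> \<Omega>(\<lambda>j. real (card (V j)))" unfolding W_def by simp
    from hyp have om: "p \<in> \<omega>(\<lambda>j. real (card (V j)) powr (-1 / (real f + 1)))" by simp
    obtain c0 where c0: "c0 > 0" and evc0: "eventually (\<lambda>j. c0 * norm (real (card (V j))) \<le> norm (real (card (W j)))) at_top"
      using landau_omega.bigE[OF Om] by blast
    define NB where "NB = (\<lambda>j. measure_pmf.prob (fault_pmf f (V j) (p j))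
                   {x. \<not> (\<exists>v\<in>W j. f < card {i. i < ell f \<and> x (v, i)})})"
    have NB0: "NB \<longlonglongrightarrow> 0"
    proof (rule tendstoI)
      fix e :: real assume e: "0 < e"
      define c where "c = max 1 ((1 / e) / c0)"
      have c: "c \<ge> 1" "c > 0" unfolding c_def by auto
      have cK: "c0 * c \<ge> 1 / e"
      proof -
        have "(1 / e) / c0 \<le> c" unfolding c_def by simp
        then have "c0 * ((1 / e) / c0) \<le> c0 * c" using c0 by (intro mult_left_mono) auto
        then show ?thesis using c0 by simp
      qed
      have ev: "eventually (\<lambda>j. c * norm (real (card (V j)) powr (-1 / (real f + 1))) \<le> norm (p j)) at_top"
        by (rule landau_omega.smallD[OF om c(2)])
      show "eventually (\<lambda>j. dist (NB j) 0 < e) sequentially"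
        using ev evne evc0
      proof eventually_elim
        case (elim j)
        have n0: "real (card (V j)) > 0" using fin[of j] elim(2) by (simp add: card_gt_0_iff)
        have p0: "0 \<le> p j" "p j \<le> 1" using prob[of j] by auto
        have pc: "c * real (card (V j)) powr (-1 / (real f + 1)) \<le> p j" using elim(1) p0 by simp
        have mc: "c0 * real (card (V j)) \<le> real (card (W j))" using elim(3) by simp
        have "NB j \<le> (1 - p j ^ (f + 1)) ^ card (W j)"
          unfolding NB_def by (rule block_prob[OF fin WV p0])
        also have "\<dots> \<le> 1 / (1 + c0 * c)" by (rule bound_b[OF n0 mc c0 pc c(1) p0(2)])
        also have "\<dots> \<le> 1 / (1 + 1 / e)"
        proof -
          have q1: "0 < 1 + 1 / e" using e by (simp add: add_pos_pos)
          have q2: "0 < 1 + c0 * c" using q1 cK by linarith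
          show ?thesis using cK by (intro divide_left_mono) (simp_all add: mult_pos_pos q1 q2)
        qed
        also have "\<dots> < e" using e by (simp add: field_simps)
        finally have "NB j < e" .
        moreover have "0 \<le> NB j" unfolding NB_def by simp
        ultimately show "dist (NB j) 0 < e" by simp
      qed
    qed
    have eqB: "(\<lambda>j. measure_pmf.prob (fault_pmf f (V j) (p j))
                   {x. \<exists>v\<in>V j. (\<exists>w. (v, w) \<in> E j) \<and> f < card {i. i < ell f \<and> x (v, i)}}) = (\<lambda>j. 1 - NB j)"
    proof
      fix j
      have "{x. \<exists>v\<in>V j. (\<exists>w. (v, w) \<in> E j) \<and> f < card {i. i < ell f \<and> x (v, i)}}
          = UNIV - {x. \<not> (\<exists>v\<in>W j. f < card {i. i < ell f \<and> x (v, i)})}" (is "_ = UNIV - ?N")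
        unfolding W_def by auto
      moreover have "measure_pmf.prob (fault_pmf f (V j) (p j)) (UNIV - ?N) = 1 - measure_pmf.prob (fault_pmf f (V j) (p j)) ?N"
        using measure_pmf.prob_compl[of ?N "fault_pmf f (V j) (p j)"] by simp
      ultimately show "measure_pmf.prob (fault_pmf f (V j) (p j))
                   {x. \<exists>v\<in>V j. (\<exists>w. (v, w) \<in> E j) \<and> f < card {i. i < ell f \<and> x (v, i)}} = 1 - NB j"
        unfolding NB_def by simp
    qed
    have B1: "(\<lambda>j. measure_pmf.prob (fault_pmf f (V j) (p j))
                   {x. \<exists>v\<in>V j. (\<exists>w. (v, w) \<in> E j) \<and> f < card {i. i < ell f \<and> x (v, i)}}) \<longlonglongrightarrow> 1"
      unfolding eqB using tendsto_diff[OF tendsto_const NB0, of 1] by simp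
    have "\<not> valid f V E Rs A tb p" for A :: "nat \<Rightarrow> ('v,'s,'m,'i) alg"
    proof
      assume va: "valid f V E Rs A tb p"
      define Sim where "Sim = (\<lambda>j. measure_pmf.prob (fault_pmf f (V j) (p j))
        {x. \<forall>adv inp. simulates f (V j) (E j) (Rs j) (A j) tb {v'. x v'} adv inp})"
      have S1: "Sim \<longlonglongrightarrow> 1" using va unfolding valid_def Sim_def .
      have S0: "Sim \<longlonglongrightarrow> 0"
      proof (rule tendsto_sandwich[of "\<lambda>_. 0" Sim sequentially NB])
        show "eventually (\<lambda>j. 0 \<le> Sim j) sequentially" unfolding Sim_def by simp
        show "eventually (\<lambda>j. Sim j \<le> NB j) sequentially"
        proof (intro always_eventually allI)
          fix j
          have "{x. \<forall>adv inp. simulates f (V j) (E j) (Rs j) (A j) tb {v'. x v'} adv inp}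
              \<subseteq> {x. \<not> (\<exists>v\<in>W j. f < card {i. i < ell f \<and> x (v, i)})}"
          proof
            fix x assume "x \<in> {x. \<forall>adv inp. simulates f (V j) (E j) (Rs j) (A j) tb {v'. x v'} adv inp}"
            then have sx: "simulates f (V j) (E j) (Rs j) (A j) tb {v'. x v'} undefined undefined" by simp
            show "x \<in> {x. \<not> (\<exists>v\<in>W j. f < card {i. i < ell f \<and> x (v, i)})}"
            proof (clarify)
              fix v assume v: "v \<in> W j" "f < card {i. i < ell f \<and> x (v, i)}"
              have "v \<in> V j" using v(1) WV by blast
              from bad_nosim[OF this v(2)] sx show False by blast
            qed
          qed
          then show "Sim j \<le> NB j" unfolding Sim_def NB_def
            by (intro measure_pmf.finite_measure_mono) auto
        qed
      qed (use NB0 in simp_all)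
      from LIMSEQ_unique[OF S0 S1] show False by simp
    qed
    then show "((\<lambda>j. measure_pmf.prob (fault_pmf f (V j) (p j))
                   {x. \<exists>v\<in>V j. (\<exists>w. (v, w) \<in> E j) \<and> f < card {i. i < ell f \<and> x (v, i)}}) \<longlonglongrightarrow> 1)
             \<and> (\<forall>A :: nat \<Rightarrow> ('v,'s,'m,'i) alg. \<not> valid f V E Rs A tb p)"
      using B1 by blast
  qed
  show ?thesis using partA partB unfolding G_def by blast
qed


end
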